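(* Let $v$ be a vector in a Hilbert space, let $\Pi'_1,\ldots,\Pi'_k$ be orthogonal projectors, and let $\Pi_i:=I-\Pi'_i$ for each $i$. Then \[ \|v-\Pi'_k\cdots\Pi'_1v\|_2^2\le\sum_{i=1}^k\|\Pi_iv\|_2^2 . \]
   Context: $\|\cdot\|_2$ denotes the Hilbert space (Euclidean) norm; $I$ is the identity operator. *)

theory Defs
  imports "HOL-Analysis.Analysis"
begin

definition orth_proj :: "('a::real_inner \<Rightarrow> 'a) \<Rightarrow> bool" where
  "orth_proj P \<longleftrightarrow> bounded_linear P \<and> (\<forall>x. P (P x) = P x)
     \<and> (\<forall>x y. inner (P x) y = inner x (P y))"

primrec proj_chain :: "(nat \<Rightarrow> 'a \<Rightarrow> 'a) \<Rightarrow> nat \<Rightarrow> 'a \<Rightarrow> 'a" where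
  "proj_chain P 0 v = v"
| "proj_chain P (Suc k) v = P (Suc k) (proj_chain P k v)"

end

theory Submission
  imports Defs
begin

lemma proj_norm_le:
  assumes "orth_proj P" shows "norm (P x) \<le> norm x"
proof -
  have "(norm (P x))\<^sup>2 = inner (P x) (P x)" by (simp add: power2_norm_eq_inner)
  also have "\<dots> = inner x (P (P x))" using assms unfolding orth_proj_def by blast
  also have "\<dots> = inner x (P x)" using assms unfolding orth_proj_def by simp
  also have "\<dots> \<le> norm x * norm (P x)" by (rule norm_cauchy_schwarz)
  finally have "(norm (P x))\<^sup>2 \<le> norm x * norm (P x)" .
  then show ?thesis
    by (metis mult_le_cancel_right norm_ge_zero not_le power2_eq_square zero_less_mult_iff mult_eq_0_iff order.order_iff_strict)
qed

lemma step:
  assumes "orth_proj P"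
  shows "(norm (v - P w))\<^sup>2 \<le> (norm (v - P v))\<^sup>2 + (norm (v - w))\<^sup>2"
proof -
  have lin: "bounded_linear P" using assms unfolding orth_proj_def by blast
  have eq: "v - P w = (v - P v) + P (v - w)"
    using linear_diff[OF bounded_linear.linear[OF lin]] by simp
  have orth: "inner (v - P v) (P (v - w)) = 0"
  proof -
    have "inner (P v) (P (v - w)) = inner v (P (P (v - w)))"
      using assms unfolding orth_proj_def by blast
    also have "\<dots> = inner v (P (v - w))" using assms unfolding orth_proj_def by simp
    finally show ?thesis by (simp add: inner_diff_left)
  qed
  have "(norm (v - P w))\<^sup>2 = (norm (v - P v))\<^sup>2 + (norm (P (v - w)))\<^sup>2"
    unfolding eq power2_norm_eq_inner using orth
    by (simp add: inner_add_left inner_add_right inner_commute)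
  also have "\<dots> \<le> (norm (v - P v))\<^sup>2 + (norm (v - w))\<^sup>2"
    using proj_norm_le[OF assms, of "v - w"] by (simp add: power_mono)
  finally show ?thesis .
qed

theorem lemma2:
  fixes v :: "'a::{real_inner, complete_space}"
    and P' :: "nat \<Rightarrow> 'a \<Rightarrow> 'a"
    and k :: nat
  assumes "\<forall>i\<in>{1..k}. orth_proj (P' i)"
  shows "(norm (v - proj_chain P' k v))\<^sup>2 \<le> (\<Sum>i=1..k. (norm (v - P' i v))\<^sup>2)"
  using assms
proof (induction k)
  case 0
  then show ?case by simp
next
  case (Suc k)
  have IH: "(norm (v - proj_chain P' k v))\<^sup>2 \<le> (\<Sum>i=1..k. (norm (v - P' i v))\<^sup>2)"
    using Suc by auto
  have op: "orth_proj (P' (Suc k))" using Suc.prems by auto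
  have "(norm (v - proj_chain P' (Suc k) v))\<^sup>2
      \<le> (norm (v - P' (Suc k) v))\<^sup>2 + (norm (v - proj_chain P' k v))\<^sup>2"
    using step[OF op] by simp
  also have "\<dots> \<le> (\<Sum>i=1..Suc k. (norm (v - P' i v))\<^sup>2)"
    using IH by simp
  finally show ?case .
qed

end
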